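(* Let $n$ be even, let $q\ge2$ be even, $p\ge1$, and let $f:\mathbb{Z}_2^n\to\mathbb{Z}_q$ satisfy $f(x)\equiv\frac q2 a(x)+\sum_{j=0}^{p-1}2^ja_j(x)\pmod q$ for Boolean functions $a,a_0,\dots,a_{p-1}$ on $\mathbb{Z}_2^n$. For $i\in\{0,\dots,2^p-1\}$ let $g_i=a\oplus z_{i,0}a_0\oplus\cdots\oplus z_{i,p-1}a_{p-1}$, and for $u\in\mathbb{Z}_2^n$ let $W(u)=(W_{g_0}(u),\dots,W_{g_{2^p-1}}(u))$. Suppose that every $g_i$ ($i=0,\dots,2^p-1$) is bent, and that for every $u\in\mathbb{Z}_2^n$ there exist $r\in\{0,\dots,2^p-1\}$ and a sign $\epsilon\in\{\pm1\}$ with $W(u)=\epsilon H^{(r)}_{2^p}$ (as vectors). Then $f$ is generalized bent.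
   Context: For $i\in\{0,\dots,2^m-1\}$, $z_i=(z_{i,0},\dots,z_{i,m-1})\in\mathbb{Z}_2^m$ is the binary vector with $i=\sum_j z_{i,j}2^j$. $H_{2^m}$ is the Sylvester–Hadamard matrix with entries $(H_{2^m})_{k,i}=(-1)^{z_k\cdot z_i}$, and $H^{(r)}_{2^m}$ its $r$-th row. $W_g(u)=2^{-n/2}\sum_{x\in\mathbb{Z}_2^n}(-1)^{g(x)\oplus u\cdot x}$; $g$ is bent if $|W_g(u)|=1$ for all $u$. With $\zeta=e^{2\pi\mathrm{i}/q}$, $\mathcal{H}_f(u)=2^{-n/2}\sum_{x}\zeta^{f(x)}(-1)^{u\cdot x}$, and $f$ is generalized bent if $|\mathcal{H}_f(u)|=1$ for all $u\in\mathbb{Z}_2^n$. *)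

theory Defs
  imports Complex_Main
begin

text \<open>Vectors of Z_2^n are represented as bool lists of length n.\<close>
definition cube :: "nat \<Rightarrow> bool list set" where
  "cube n = {xs. length xs = n}"

text \<open>Inner product u . x over Z_2, as a Boolean (True = 1).\<close>
definition dotv :: "bool list \<Rightarrow> bool list \<Rightarrow> bool" where
  "dotv u x = odd (card {j. j < length x \<and> u ! j \<and> x ! j})"

definition zbit :: "nat \<Rightarrow> nat \<Rightarrow> bool" where
  "zbit i j = odd (i div 2 ^ j)"

definition hadamard :: "nat \<Rightarrow> nat \<Rightarrow> nat \<Rightarrow> real" where
  "hadamard m k i = (-1) ^ card {j. j < m \<and> zbit k j \<and> zbit i j}"

definition walsh :: "nat \<Rightarrow> (bool list \<Rightarrow> bool) \<Rightarrow> bool list \<Rightarrow> real" where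
  "walsh n g u = (1 / sqrt (2 ^ n)) *
     (\<Sum>x\<in>cube n. (-1) ^ (of_bool (g x \<noteq> dotv u x) :: nat))"

definition bent :: "nat \<Rightarrow> (bool list \<Rightarrow> bool) \<Rightarrow> bool" where
  "bent n g \<longleftrightarrow> (\<forall>u\<in>cube n. \<bar>walsh n g u\<bar> = 1)"

text \<open>Generalized Walsh-Hadamard transform of f : Z_2^n -> Z_q (values taken as integers
  mod q; zeta^(f x) = exp(2 pi i f(x)/q) is well-defined modulo q).\<close>
definition gwalsh :: "nat \<Rightarrow> nat \<Rightarrow> (bool list \<Rightarrow> int) \<Rightarrow> bool list \<Rightarrow> complex" where
  "gwalsh n q f u = complex_of_real (1 / sqrt (2 ^ n)) *
     (\<Sum>x\<in>cube n. cis (2 * pi * real_of_int (f x) / real q) *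
        (if dotv u x then -1 else 1))"

definition gbent :: "nat \<Rightarrow> nat \<Rightarrow> (bool list \<Rightarrow> int) \<Rightarrow> bool" where
  "gbent n q f \<longleftrightarrow> (\<forall>u\<in>cube n. cmod (gwalsh n q f u) = 1)"

definition gcomb :: "nat \<Rightarrow> (bool list \<Rightarrow> bool) \<Rightarrow> (nat \<Rightarrow> bool list \<Rightarrow> bool) \<Rightarrow> nat
    \<Rightarrow> bool list \<Rightarrow> bool" where
  "gcomb p a as i x = (a x \<noteq> odd (card {j. j < p \<and> zbit i j \<and> as j x}))"

end

theory Submission imports Defs begin

lemma zbit_shift: "i < 2^p \<Longrightarrow> j < p \<Longrightarrow> zbit (i + 2^p) j = zbit i j"
proof -
  assume i: "i < 2^p" and j: "j < p"
  have "(2::nat)^p = 2^j * 2^(p-j)" using j by (simp add: power_add[symmetric])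
  hence "(i + 2^p) div 2^j = i div 2^j + 2^(p-j)" by simp
  moreover have "even ((2::nat)^(p-j))" using j by simp
  ultimately show ?thesis unfolding zbit_def by simp
qed

lemma zbit_top0: "i < 2^p \<Longrightarrow> \<not> zbit i p"
  unfolding zbit_def by simp

lemma zbit_top1: "i < 2^p \<Longrightarrow> zbit (i + 2^p) p"
  unfolding zbit_def by simp

lemma sum_pow2_split:
  fixes F :: "nat \<Rightarrow> 'a::comm_monoid_add"
  shows "(\<Sum>i<2^Suc p. F i) = (\<Sum>i<2^p. F i) + (\<Sum>i<2^p. F (i + 2^p))"
proof -
  have "{..<2^Suc p} = {..<(2::nat)^p} \<union> (\<lambda>i. i + 2^p) ` {..<2^p}"
  proof (intro equalityI subsetI)
    fix x assume "x \<in> {..<(2::nat)^Suc p}"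
    then have x: "x < 2 * 2^p" by simp
    show "x \<in> {..<(2::nat)^p} \<union> (\<lambda>i. i + 2^p) ` {..<2^p}"
    proof (cases "x < 2^p")
      case True then show ?thesis by simp
    next
      case False
      then have "x = (x - 2^p) + 2^p" "x - 2^p < 2^p" using x by auto
      then show ?thesis by blast
    qed
  qed auto
  moreover have "{..<(2::nat)^p} \<inter> (\<lambda>i. i + 2^p) ` {..<2^p} = {}" by auto
  ultimately show ?thesis
    by (simp add: sum.union_disjoint sum.reindex)
qed

lemma sum_prod_bits:
  fixes h :: "nat \<Rightarrow> bool \<Rightarrow> 'a::comm_ring_1"
  shows "(\<Sum>i<2^p. \<Prod>j<p. h j (zbit i j)) = (\<Prod>j<p. h j False + h j True)"
proof (induction p)
  case 0 then show ?case by simp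
next
  case (Suc p)
  have A: "(\<Sum>i<2^p. \<Prod>j<Suc p. h j (zbit i j)) = (\<Sum>i<2^p. \<Prod>j<p. h j (zbit i j)) * h p False"
    by (simp add: sum_distrib_right zbit_top0)
  have B: "(\<Sum>i<2^p. \<Prod>j<Suc p. h j (zbit (i+2^p) j)) = (\<Sum>i<2^p. \<Prod>j<p. h j (zbit i j)) * h p True"
    by (auto simp add: sum_distrib_right zbit_top1 zbit_shift intro!: sum.cong prod.cong)
  show ?case
    by (simp only: sum_pow2_split A B Suc) (simp add: algebra_simps)
qed

lemma pow_card_prod:
  fixes p :: nat shows "((-1::'a::comm_ring_1) ^ card {j. j < p \<and> P j}) = (\<Prod>j<p. if P j then -1 else 1)"
proof (induction p)
  case 0 then show ?case by simp
next
  case (Suc p)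
  have "{j. j < Suc p \<and> P j} = {j. j < p \<and> P j} \<union> (if P p then {p} else {})" by (auto simp: less_Suc_eq)
  then show ?case using Suc by (auto simp: card_insert_if)
qed

lemma sum_prod_sign:
  fixes h :: "nat \<Rightarrow> bool \<Rightarrow> 'a::comm_ring_1"
  shows "(\<Sum>i<2^p. (\<Prod>j<p. h j (zbit i j)) * (-1) ^ card {j. j < p \<and> zbit i j \<and> T j})
     = (\<Prod>j<p. h j False + (if T j then - h j True else h j True))"
proof -
  have "(\<Sum>i<2^p. (\<Prod>j<p. h j (zbit i j)) * (-1) ^ card {j. j < p \<and> zbit i j \<and> T j})
      = (\<Sum>i<2^p. \<Prod>j<p. h j (zbit i j) * (if zbit i j \<and> T j then -1 else 1))"
    by (simp add: pow_card_prod prod.distrib del: conj_assoc)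
  also have "\<dots> = (\<Prod>j<p. h j False * (if False \<and> T j then -1 else 1) + h j True * (if True \<and> T j then -1 else 1))"
    by (rule sum_prod_bits)
  also have "\<dots> = (\<Prod>j<p. h j False + (if T j then - h j True else h j True))"
    by (intro prod.cong) auto
  finally show ?thesis .
qed

lemma cis_sum_bits:
  "cis (2 * pi * real_of_int (\<Sum>j<p. 2 ^ j * of_bool (B j)) / real q)
   = (\<Prod>j<p. if B j then cis (2 * pi * 2 ^ j / real q) else 1)"
proof (induction p)
  case 0 then show ?case by simp
next
  case (Suc p)
  have "cis (2 * pi * real_of_int (\<Sum>j<Suc p. 2 ^ j * of_bool (B j)) / real q)
     = cis (2 * pi * real_of_int (\<Sum>j<p. 2 ^ j * of_bool (B j)) / real q
            + 2 * pi * real_of_int (2 ^ p * of_bool (B p)) / real q)"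
    by (simp add: add_divide_distrib distrib_left)
  also have "\<dots> = cis (2 * pi * real_of_int (\<Sum>j<p. 2 ^ j * of_bool (B j)) / real q)
            * cis (2 * pi * real_of_int (2 ^ p * of_bool (B p)) / real q)"
    by (simp add: cis_mult)
  finally show ?case using Suc by simp
qed

lemma cis_mod:
  fixes q :: nat and F A :: int
  assumes "q > 0" "F mod int q = A mod int q"
  shows "cis (2 * pi * real_of_int F / real q) = cis (2 * pi * real_of_int A / real q)"
proof -
  obtain k where k: "F = A + int q * k"
  proof -
    have "int q dvd F - A" using assms(2) by (simp add: mod_eq_dvd_iff)
    then obtain k where "F - A = int q * k" by (elim dvdE)
    then have "F = A + int q * k" by (simp add: algebra_simps)
    then show ?thesis by (rule that)
  qed
  have "2 * pi * real_of_int F / real q = 2 * pi * real_of_int A / real q + 2 * pi * real_of_int k"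
    using assms(1) by (simp add: k field_simps)
  then show ?thesis by (simp add: cis_mult[symmetric])
qed

lemma cis_half:
  fixes q :: nat
  assumes "even q" "q > 0"
  shows "cis (2 * pi * real_of_int (int (q div 2) * of_bool b) / real q) = (if b then -1 else 1)"
proof -
  have "real (q div 2) * 2 = real q" using assms(1) by (simp add: real_of_nat_div)
  then have "2 * pi * real (q div 2) / real q = pi" using assms(2)
    by (simp add: field_simps)
  then show ?thesis by (cases b) simp_all
qed

lemma neg1_pow_card: "((-1::'a::comm_ring_1) ^ N) = (if odd N then -1 else 1)"
  by simp

lemma sign_xor: "((if (b \<noteq> c) then -1 else 1)::'a::comm_ring_1) = (if b then -1 else 1) * (if c then -1 else 1)"
  by auto

lemma walsh_complex:
  "complex_of_real (walsh n g u) = complex_of_real (1 / sqrt (2 ^ n)) *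
     (\<Sum>x\<in>cube n. (if g x then -1 else 1) * (if dotv u x then -1 else 1))"
  unfolding walsh_def of_real_mult of_real_sum
  by (intro arg_cong2[where f="(*)"] refl sum.cong) auto

theorem theorem4:
  fixes n q p :: nat
    and f :: "bool list \<Rightarrow> int"
    and a :: "bool list \<Rightarrow> bool"
    and as :: "nat \<Rightarrow> bool list \<Rightarrow> bool"
  assumes "even n"
    and "even q" and "q \<ge> 2"
    and "p \<ge> 1"
    and "\<forall>x\<in>cube n. f x mod int q = (int (q div 2) * of_bool (a x)
                          + (\<Sum>j<p. 2 ^ j * of_bool (as j x))) mod int q"
    and "\<forall>i<2 ^ p. bent n (gcomb p a as i)"
    and "\<forall>u\<in>cube n. \<exists>r<2 ^ p. \<exists>\<epsilon>::real. (\<epsilon> = 1 \<or> \<epsilon> = -1) \<and>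
            (\<forall>i<2 ^ p. walsh n (gcomb p a as i) u = \<epsilon> * hadamard p r i)"
  shows "gbent n q f"
proof -
  define z where "z j = cis (2 * pi * 2 ^ j / real q)" for j :: nat
  define h where "h j b = (if b then (1 - z j) / 2 else (1 + z j) / 2)" for j b
  define c where "c i = (\<Prod>j<p. h j (zbit i j))" for i
  define sg where "sg b = (if b then -1 else 1 :: complex)" for b
  have qpos: "q > 0" using assms(3) by simp
  have hT: "h j False + (if T then - h j True else h j True) = (if T then z j else 1)" for j T
    unfolding h_def by (auto simp: field_simps)
  have key: "(\<Sum>i<2^p. c i * (-1) ^ card {j. j < p \<and> zbit i j \<and> T j})
      = (\<Prod>j<p. if T j then z j else 1)" for T
    unfolding c_def sum_prod_sign hT ..
  have pt: "cis (2 * pi * real_of_int (f x) / real q) = (\<Sum>i<2^p. c i * sg (gcomb p a as i x))"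
    if x: "x \<in> cube n" for x
  proof -
    have "cis (2 * pi * real_of_int (f x) / real q)
        = cis (2 * pi * real_of_int (int (q div 2) * of_bool (a x) + (\<Sum>j<p. 2 ^ j * of_bool (as j x))) / real q)"
      using cis_mod[OF qpos] assms(5) x by blast
    also have "\<dots> = cis (2 * pi * real_of_int (int (q div 2) * of_bool (a x)) / real q)
         * cis (2 * pi * real_of_int (\<Sum>j<p. 2 ^ j * of_bool (as j x)) / real q)"
      by (simp add: cis_mult add_divide_distrib distrib_left del: of_int_sum)
    also have "\<dots> = sg (a x) * (\<Prod>j<p. if as j x then z j else 1)"
      unfolding cis_half[OF assms(2) qpos] cis_sum_bits sg_def z_def ..
    also have "\<dots> = sg (a x) * (\<Sum>i<2^p. c i * (-1) ^ card {j. j < p \<and> zbit i j \<and> as j x})"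
      by (simp add: key)
    also have "\<dots> = (\<Sum>i<2^p. c i * sg (gcomb p a as i x))"
      unfolding sum_distrib_left
      by (intro sum.cong refl) (simp add: gcomb_def sg_def)
    finally show ?thesis .
  qed
  show ?thesis unfolding gbent_def
  proof
    fix u assume u: "u \<in> cube n"
    obtain r \<epsilon> where r: "r < 2^p" and eps: "\<epsilon> = 1 \<or> \<epsilon> = -1"
      and W: "\<forall>i<2 ^ p. walsh n (gcomb p a as i) u = \<epsilon> * hadamard p r i"
      using assms(7) u by blast
    have "gwalsh n q f u = complex_of_real (1 / sqrt (2 ^ n)) *
       (\<Sum>x\<in>cube n. (\<Sum>i<2^p. c i * sg (gcomb p a as i x)) * sg (dotv u x))"
      unfolding gwalsh_def by (intro arg_cong2[where f="(*)"] refl sum.cong) (simp_all add: pt sg_def)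
    also have "\<dots> = (\<Sum>i<2^p. c i * complex_of_real (walsh n (gcomb p a as i) u))"
      unfolding walsh_complex sum_distrib_right sum_distrib_left
      by (subst sum.swap) (simp add: sg_def algebra_simps sum_distrib_left)
    also have "\<dots> = complex_of_real \<epsilon> * (\<Sum>i<2^p. c i * (-1) ^ card {j. j < p \<and> zbit i j \<and> zbit r j})"
      unfolding sum_distrib_left
      by (intro sum.cong refl) (simp add: W hadamard_def conj_commute)
    also have "\<dots> = complex_of_real \<epsilon> * (\<Prod>j<p. if zbit r j then z j else 1)"
      by (simp add: key)
    finally have "cmod (gwalsh n q f u) = cmod (complex_of_real \<epsilon> * (\<Prod>j<p. if zbit r j then z j else 1))" by simp
    also have "\<dots> = 1" using eps by (auto simp: norm_mult prod_norm[symmetric] z_def if_distrib intro!: prod.neutral)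
    finally show "cmod (gwalsh n q f u) = 1" .
  qed
qed

end
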